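(* Let $c\ge0$, let $\rho:[0,\infty)\to[0,\infty)$ be non-decreasing and differentiable, and let $f,g:[0,\infty)\to[0,\infty)$ be Borel measurable and such that $$\Delta:=\sup_{r\ge r_0}\rho\Big(\int_{r_0}^r g(u)du+c\Big)^{1+\beta}\int_r^\infty f(u)du<\infty$$ for some $r_0\ge0$ and $\beta\ge0$. Then: (i) if $\beta>0$, for all $r\ge r_0$, $$\int_r^\infty\rho\Big(\int_{r_0}^u g(v)dv+c\Big)f(u)du\le\frac{\Delta(1+\beta)}{\beta}\rho\Big(\int_{r_0}^r g(u)du+c\Big)^{-\beta};$$ (ii) if $\beta=0$ and either $\int_{r_0}^\infty g(r)dr<\infty$ or $\rho$ is bounded, then for all $r\ge r_0$, $$\int_r^\infty\rho\Big(\int_{r_0}^u g(v)dv+c\Big)f(u)du\le\Delta+\Delta\ln\frac{\rho\big(\int_{r_0}^\infty g(u)du+c\big)}{\rho\big(\int_{r_0}^r g(u)du+c\big)},$$ where in the bounded case $\rho(\int_{r_0}^\infty g+c)$ is understood as $\lim_{t\to\infty}\rho(t)$ if the integral diverges. *)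

theory Defs
  imports "HOL-Analysis.Analysis"
begin

text \<open>Extension of rho to [0,infinity]: at infinity it is the limit (= supremum,
  rho being non-decreasing) of rho(t) as t tends to infinity.\<close>
definition rhobar :: "(real \<Rightarrow> real) \<Rightarrow> ennreal \<Rightarrow> ennreal" where
  "rhobar rho x = (if x = top then (SUP t\<in>{0..}. ennreal (rho t)) else ennreal (rho (enn2real x)))"

definition epowr :: "ennreal \<Rightarrow> real \<Rightarrow> ennreal" where
  "epowr x a =
     (if a = 0 then 1
      else if x = top then (if a > 0 then top else 0)
      else if x = 0 then (if a > 0 then 0 else top)
      else ennreal (enn2real x powr a))"

definition Gint :: "(real \<Rightarrow> real) \<Rightarrow> real \<Rightarrow> real \<Rightarrow> ennreal" where
  "Gint g a b = (\<integral>\<^sup>+ u\<in>{a..b}. ennreal (g u) \<partial>lborel)"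

end

theory Submission imports Defs begin
lemma upset_borel:
  fixes U :: "real set"
  assumes up: "\<And>x z. x \<in> U \<Longrightarrow> x \<le> z \<Longrightarrow> z \<in> U"
  shows "U \<in> sets borel"
proof (cases "U = {}")
  case True then show ?thesis by simp
next
  case ne: False
  show ?thesis
  proof (cases "bdd_below U")
    case False
    have "z \<in> U" for z
    proof -
      from False obtain x where "x \<in> U" "x < z" unfolding bdd_below_def by (meson not_le)
      then show "z \<in> U" using up by auto
    qed
    then have "U = UNIV" by auto
    then show ?thesis by simp
  next
    case True
    define a where "a = Inf U"
    have sub1: "{a<..} \<subseteq> U"
    proof
      fix z assume "z \<in> {a<..}"
      then have "Inf U < z" by (simp add: a_def)
      then obtain x where "x \<in> U" "x < z" using cInf_less_iff[OF ne True] by auto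
      then show "z \<in> U" using up by auto
    qed
    have sub2: "U \<subseteq> {a..}" using cInf_lower[OF _ True] a_def by auto
    show ?thesis
    proof (cases "a \<in> U")
      case True
      then have "U = {a..}" using sub1 sub2 by (auto simp: subset_iff) (metis order_le_less)
      then show ?thesis by simp
    next
      case False
      then have "U = {a<..}" using sub1 sub2 by (auto simp: subset_iff) (metis order_le_less)
      then show ?thesis by simp
    qed
  qed
qed

lemma mono_borel_measurable_gen:
  fixes h :: "real \<Rightarrow> 'b::{linorder_topology, second_countable_topology}"
  assumes "mono h"
  shows "h \<in> borel_measurable borel"
proof (rule borel_measurableI_greater)
  fix y
  have "{x. y < h x} \<in> sets borel"
    by (rule upset_borel) (use assms in \<open>auto dest: monoD intro: less_le_trans\<close>)
  then show "{x \<in> space borel. y < h x} \<in> sets borel" by simp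
qed

lemma emeasure_lborel_Ici_top: "emeasure lborel {(0::real)..} = top"
proof (rule ccontr)
  assume "emeasure lborel {(0::real)..} \<noteq> top"
  then obtain n where n: "emeasure lborel {(0::real)..} < of_nat n"
    using ennreal_Ex_less_of_nat top.not_eq_extremum by blast
  have "emeasure lborel {0..real n} \<le> emeasure lborel {(0::real)..}"
    by (rule emeasure_mono) auto
  moreover have "emeasure lborel {0..real n} = of_nat n" by (simp add: ennreal_of_nat_eq_real_of_nat)
  ultimately show False using n by simp
qed

lemma layer: "(\<integral>\<^sup>+t. indicator {t. 0 \<le> t \<and> ennreal t < x} t \<partial>lborel) = (x::ennreal)"
proof (cases "x = top")
  case True
  then have "{t. 0 \<le> t \<and> ennreal t < x} = {0..}" by auto
  then show ?thesis using True by (simp add: emeasure_lborel_Ici_top)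
next
  case False
  then obtain a where a: "x = ennreal a" "a \<ge> 0" by (cases x) auto
  then have "{t. 0 \<le> t \<and> ennreal t < x} = {0..<a}" by (auto simp: ennreal_less_iff)
  then show ?thesis using a by simp
qed

lemma Ioi_SUP_integral:
  fixes f :: "real \<Rightarrow> real"
  assumes [measurable]: "f \<in> borel_measurable borel"
  shows "(\<integral>\<^sup>+x. ennreal (f x) * indicator {a<..} x \<partial>lborel)
     = (SUP n. \<integral>\<^sup>+x. ennreal (f x) * indicator {a + 1 / Suc n..} x \<partial>lborel)"
proof -
  let ?F = "\<lambda>(n::nat) x. ennreal (f x) * indicator {a + 1 / Suc n..} x"
  have inc: "incseq ?F"
  proof (rule incseq_SucI, rule le_funI)
    fix n x
    have "a + 1 / Suc (Suc n) \<le> a + 1 / Suc n" by (simp add: frac_le)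
    then show "?F n x \<le> ?F (Suc n) x"
      by (auto split: split_indicator intro: mult_left_mono)
  qed
  have pt: "(SUP n. ?F n x) = ennreal (f x) * indicator {a<..} x" for x
  proof (cases "a < x")
    case True
    obtain n where n: "1 / Suc n < x - a"
      using True by (metis diff_gt_0_iff_gt nat_approx_posE)
    have "?F n x = ennreal (f x)" using n by (simp add: indicator_def)
    moreover have "?F m x \<le> ennreal (f x)" for m by (simp add: indicator_def)
    ultimately have "(SUP n. ?F n x) = ennreal (f x)"
      by (metis (no_types, lifting) SUP_upper UNIV_I antisym SUP_least)
    then show ?thesis using True by simp
  next
    case False
    then have "?F n x = 0" for n
      by (simp add: indicator_def) (smt (verit, del_insts) of_nat_less_0_iff divide_pos_pos)
    then have "(SUP n. ?F n x) = 0" by (metis (no_types, lifting) SUP_bot_conv(2) bot_ennreal)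
    then show ?thesis using False by simp
  qed
  have "(\<integral>\<^sup>+x. ennreal (f x) * indicator {a<..} x \<partial>lborel) = (\<integral>\<^sup>+x. (SUP n. ?F n x) \<partial>lborel)"
    by (rule nn_integral_cong) (simp only: pt)
  also have "\<dots> = (SUP n. integral\<^sup>N lborel (?F n))"
    by (rule nn_integral_monotone_convergence_SUP[OF inc]) simp
  finally show ?thesis .
qed

lemma upset_int_bound:
  fixes h :: "real \<Rightarrow> ennreal" and f :: "real \<Rightarrow> real" and b t :: ennreal
  assumes hm: "mono h" and [measurable]: "f \<in> borel_measurable borel"
    and bnd: "\<And>u. r \<le> u \<Longrightarrow> t < h u \<Longrightarrow> (\<integral>\<^sup>+x. ennreal (f x) * indicator {u..} x \<partial>lborel) \<le> b"
  shows "(\<integral>\<^sup>+x. ennreal (f x) * indicator {x. r \<le> x \<and> t < h x} x \<partial>lborel) \<le> b"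
proof -
  define S where "S = {x. r \<le> x \<and> t < h x}"
  have up: "x \<in> S \<Longrightarrow> x \<le> z \<Longrightarrow> z \<in> S" for x z
    unfolding S_def using hm by (auto dest: monoD intro: less_le_trans)
  show ?thesis
  proof (cases "S = {}")
    case True then show ?thesis by (simp add: S_def[symmetric])
  next
    case ne: False
    have bdd: "bdd_below S" unfolding S_def bdd_below_def by auto
    define a where "a = Inf S"
    have sub1: "{a<..} \<subseteq> S"
    proof
      fix z assume "z \<in> {a<..}"
      then have "Inf S < z" by (simp add: a_def)
      then obtain x where "x \<in> S" "x < z" using cInf_less_iff[OF ne bdd] by auto
      then show "z \<in> S" using up by auto
    qed
    have sub2: "S \<subseteq> {a..}" using cInf_lower[OF _ bdd] a_def by auto
    show ?thesis
    proof (cases "a \<in> S")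
      case True
      then have "S = {a..}" using sub1 sub2 by (auto simp: subset_iff) (metis order_le_less)
      moreover have "r \<le> a" "t < h a" using True by (auto simp: S_def)
      ultimately show ?thesis using bnd[of a] by (simp add: S_def[symmetric])
    next
      case False
      then have "S = {a<..}" using sub1 sub2 by (auto simp: subset_iff) (metis order_le_less)
      then have "(\<integral>\<^sup>+x. ennreal (f x) * indicator {x. r \<le> x \<and> t < h x} x \<partial>lborel)
         = (SUP n. \<integral>\<^sup>+x. ennreal (f x) * indicator {a + 1 / Suc n..} x \<partial>lborel)"
        using Ioi_SUP_integral[of f a] by (simp add: S_def[symmetric])
      also have "\<dots> \<le> b"
      proof (rule SUP_least)
        fix n :: nat
        have "a + 1 / Suc n \<in> S" using sub1 by auto
        then show "(\<integral>\<^sup>+x. ennreal (f x) * indicator {a + 1 / Suc n..} x \<partial>lborel) \<le> b"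
          using bnd by (auto simp: S_def)
      qed
      finally show ?thesis .
    qed
  qed
qed

lemma core:
  fixes h :: "real \<Rightarrow> ennreal" and f :: "real \<Rightarrow> real" and B :: "real \<Rightarrow> ennreal" and N :: ennreal
  assumes hm: "mono h" and fm[measurable]: "f \<in> borel_measurable borel"
    and Bm[measurable]: "B \<in> borel_measurable borel"
    and bnd: "\<And>u t. r \<le> u \<Longrightarrow> 0 < t \<Longrightarrow> ennreal t < h u \<Longrightarrow> (\<integral>\<^sup>+x. ennreal (f x) * indicator {u..} x \<partial>lborel) \<le> B t"
    and hN: "\<And>u. r \<le> u \<Longrightarrow> h u \<le> N"
  shows "(\<integral>\<^sup>+u. h u * ennreal (f u) * indicator {r..} u \<partial>lborel)
     \<le> h r * (\<integral>\<^sup>+x. ennreal (f x) * indicator {r..} x \<partial>lborel)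
       + (\<integral>\<^sup>+t. B t * indicator {t. 0 < t \<and> h r \<le> ennreal t \<and> ennreal t < N} t \<partial>lborel)"
proof -
  have hmeas[measurable]: "h \<in> borel_measurable borel" by (rule mono_borel_measurable_gen[OF hm])
  define K where "K t u = indicator {t. 0 \<le> t \<and> ennreal t < h u} t * (ennreal (f u) * indicator {r..} u)" for t u
  have Kmeas: "case_prod K \<in> borel_measurable (lborel \<Otimes>\<^sub>M lborel)"
  proof -
    have "case_prod K = (\<lambda>p. indicator {p. 0 \<le> fst p \<and> ennreal (fst p) < h (snd p)} p * (ennreal (f (snd p)) * indicator {r..} (snd p)))"
      by (auto simp: K_def fun_eq_iff indicator_def)
    also have "\<dots> \<in> borel_measurable (lborel \<Otimes>\<^sub>M lborel)" by measurable
    finally show ?thesis .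
  qed
  define F where "F = (\<integral>\<^sup>+x. ennreal (f x) * indicator {r..} x \<partial>lborel)"
  have "(\<integral>\<^sup>+u. h u * ennreal (f u) * indicator {r..} u \<partial>lborel) = (\<integral>\<^sup>+u. (\<integral>\<^sup>+t. K t u \<partial>lborel) \<partial>lborel)"
  proof (rule nn_integral_cong)
    fix u
    have "(\<integral>\<^sup>+t. K t u \<partial>lborel) = (\<integral>\<^sup>+t. indicator {t. 0 \<le> t \<and> ennreal t < h u} t \<partial>lborel) * (ennreal (f u) * indicator {r..} u)"
      unfolding K_def by (rule nn_integral_multc) measurable
    then show "h u * ennreal (f u) * indicator {r..} u = (\<integral>\<^sup>+t. K t u \<partial>lborel)"
      by (simp add: layer mult.assoc)
  qed
  also have "\<dots> = (\<integral>\<^sup>+t. (\<integral>\<^sup>+u. K t u \<partial>lborel) \<partial>lborel)"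
    by (rule lborel_pair.Fubini'[OF Kmeas])
  also have "\<dots> \<le> (\<integral>\<^sup>+t. indicator {t. 0 \<le> t \<and> ennreal t < h r} t * F
       + B t * indicator {t. 0 < t \<and> h r \<le> ennreal t \<and> ennreal t < N} t \<partial>lborel)"
  proof (rule nn_integral_mono_AE)
    show "AE t in lborel. (\<integral>\<^sup>+u. K t u \<partial>lborel) \<le> indicator {t. 0 \<le> t \<and> ennreal t < h r} t * F
       + B t * indicator {t. 0 < t \<and> h r \<le> ennreal t \<and> ennreal t < N} t"
      using AE_lborel_singleton[of 0]
    proof eventually_elim
      case (elim t)
      show ?case
      proof (cases "t < 0")
        case True
        then have "K t u = 0" for u by (simp add: K_def)
        then show ?thesis by simp
      next
        case False
        then have t: "0 < t" using elim by simp
        show ?thesis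
        proof (cases "ennreal t < h r")
          case True
          have "(\<integral>\<^sup>+u. K t u \<partial>lborel) \<le> F"
            unfolding F_def K_def by (rule nn_integral_mono) (auto simp: indicator_def)
          moreover have "\<not> (h r \<le> ennreal t)" using True by simp
          ultimately show ?thesis using True t by (simp add: indicator_def)
        next
          case hr: False
          show ?thesis
          proof (cases "ennreal t < N")
            case False
            have "K t u = 0" for u
            proof (cases "r \<le> u")
              case True
              then have "h u \<le> ennreal t" using hN[of u] False by auto
              then show ?thesis by (simp add: K_def indicator_def not_less)
            qed (simp add: K_def)
            then show ?thesis by simp
          next
            case True
            have "(\<integral>\<^sup>+u. K t u \<partial>lborel) = (\<integral>\<^sup>+x. ennreal (f x) * indicator {x. r \<le> x \<and> ennreal t < h x} x \<partial>lborel)"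
              using t by (intro nn_integral_cong) (auto simp: K_def indicator_def)
            also have "\<dots> \<le> B t"
              by (rule upset_int_bound[OF hm fm]) (use bnd t in auto)
            finally show ?thesis using True t hr by (simp add: indicator_def)
          qed
        qed
      qed
    qed
  qed
  also have "\<dots> = (\<integral>\<^sup>+t. indicator {t. 0 \<le> t \<and> ennreal t < h r} t * F \<partial>lborel)
       + (\<integral>\<^sup>+t. B t * indicator {t. 0 < t \<and> h r \<le> ennreal t \<and> ennreal t < N} t \<partial>lborel)"
    by (rule nn_integral_add) measurable
  also have "(\<integral>\<^sup>+t. indicator {t. 0 \<le> t \<and> ennreal t < h r} t * F \<partial>lborel) = h r * F"
    by (subst nn_integral_multc) (measurable, simp add: layer)
  finally show ?thesis by (simp add: F_def)
qed

lemma int_i: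
  fixes a \<beta> :: real
  assumes a: "0 < a" and b: "0 < \<beta>"
  shows "(\<integral>\<^sup>+t. ennreal (t powr -(1+\<beta>)) * indicator {a..} t \<partial>lborel) = ennreal (a powr -\<beta> / \<beta>)"
proof -
  have D: "DERIV (\<lambda>t. -(t powr -\<beta>)/\<beta>) x :> x powr -(1+\<beta>)" if "a \<le> x" for x
  proof -
    have x: "0 < x" using a that by simp
    have "((\<lambda>t. t powr -\<beta>) has_real_derivative (-\<beta>) * x powr (-\<beta> - 1)) (at x)"
      by (rule has_real_derivative_powr[OF x])
    from DERIV_cdivide[OF DERIV_minus[OF this], of \<beta>]
    have "DERIV (\<lambda>t. -(t powr -\<beta>)/\<beta>) x :> - (- \<beta> * x powr (- \<beta> - 1)) / \<beta>" .
    moreover have "- (- \<beta> * x powr (- \<beta> - 1)) / \<beta> = x powr -(1+\<beta>)" proof -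
      have e: "-(1+\<beta>) = - \<beta> - 1" by simp
      show ?thesis unfolding e using b by simp
    qed
    ultimately show ?thesis by simp
  qed
  have L: "((\<lambda>t. -(t powr -\<beta>)/\<beta>) \<longlongrightarrow> 0) at_top"
  proof -
    have "((\<lambda>t::real. t powr -\<beta>) \<longlongrightarrow> 0) at_top"
      by (rule tendsto_neg_powr[OF _ filterlim_ident]) (use b in simp)
    then have "((\<lambda>t::real. -(t powr -\<beta>)) \<longlongrightarrow> 0) at_top" using tendsto_minus by fastforce
    from tendsto_divide_zero[OF this, of \<beta>] show ?thesis by simp
  qed
  have "(\<integral>\<^sup>+t. ennreal (t powr -(1+\<beta>)) * indicator {a..} t \<partial>lborel) = ennreal (0 - (-(a powr -\<beta>)/\<beta>))"
    by (rule nn_integral_FTC_atLeast[OF _ D _ L]) auto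
  then show ?thesis by simp
qed

lemma int_ii:
  fixes a n :: real
  assumes a: "0 < a" and an: "a \<le> n"
  shows "(\<integral>\<^sup>+t. ennreal (t powr -1) * indicator {a..n} t \<partial>lborel) = ennreal (ln n - ln a)"
proof (rule nn_integral_FTC_Icc[OF _ _ _ an])
  fix x assume "x \<in> {a..n}"
  then have x: "0 < x" using a by auto
  show "DERIV ln x :> x powr -1" using DERIV_ln[OF x] x by (simp add: powr_neg_one divide_inverse)
  show "0 \<le> x powr -1" by simp
qed auto

lemma epowr_pos:
  assumes "0 < a" "p \<noteq> 0" shows "epowr (ennreal a) p = ennreal (a powr p)"
  using assms by (simp add: epowr_def)

lemma epowr_one: "epowr x 1 = x"
proof -
  have "x \<noteq> top \<Longrightarrow> x \<noteq> 0 \<Longrightarrow> ennreal (enn2real x powr 1) = x"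
    by (cases x) auto
  then show ?thesis by (auto simp: epowr_def)
qed

lemma rhobar_mono:
  assumes rm: "mono_on {0..} rho" and le: "x \<le> y"
  shows "rhobar rho x \<le> rhobar rho y"
proof (cases "y = top")
  case True
  show ?thesis
  proof (cases "x = top")
    case False
    have "ennreal (rho (enn2real x)) \<le> (SUP t\<in>{0..}. ennreal (rho t))"
      by (rule SUP_upper) simp
    then show ?thesis using True False by (simp add: rhobar_def)
  qed (use True in \<open>simp add: rhobar_def\<close>)
next
  case False
  then have xt: "x \<noteq> top" using le top.extremum_uniqueI by auto
  have "enn2real x \<le> enn2real y" using le False by (simp add: enn2real_mono top.not_eq_extremum)
  then have "rho (enn2real x) \<le> rho (enn2real y)" using rm by (auto intro: mono_onD)
  then show ?thesis using False xt by (simp add: rhobar_def ennreal_leI)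
qed

lemma epowr_bound:
  fixes D F x :: ennreal and p t :: real
  assumes p: "0 < p" and t: "0 < t" and tx: "ennreal t < x" and le: "epowr x p * F \<le> D"
  shows "F \<le> D * ennreal (t powr (-p))"
proof (cases "x = top")
  case True
  then have tF: "top * F \<le> D" using le p by (simp add: epowr_def)
  show ?thesis
  proof (cases "F = 0")
    case False
    then have "top * F = top" by simp
    then have "D = top" using tF by (simp add: top_unique)
    moreover have "ennreal (t powr (-p)) \<noteq> 0" using t by simp
    ultimately show ?thesis by (simp add: ennreal_top_mult)
  qed simp
next
  case False
  then obtain a where a: "x = ennreal a" "0 \<le> a" by (cases x) auto
  have at: "t < a" using tx a t by (simp add: ennreal_less_iff)
  then have a0: "0 < a" using t by simp
  have e: "ennreal (a powr p) * F \<le> D" using le a a0 p by (simp add: epowr_pos)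
  have tp: "t powr p \<le> a powr p" using at t p by (intro powr_mono2) auto
  have tp0: "0 < t powr p" using t by simp
  have k: "1 \<le> t powr (-p) * a powr p"
  proof -
    have "t powr (-p) * a powr p = a powr p / t powr p" by (simp add: powr_minus divide_inverse mult.commute)
    also have "1 \<le> a powr p / t powr p" using tp tp0 by simp
    finally show ?thesis .
  qed
  have "F = 1 * F" by simp
  also have "\<dots> \<le> ennreal (t powr (-p) * a powr p) * F"
    by (rule mult_right_mono) (use k in \<open>simp_all add: ennreal_1[symmetric] ennreal_leI del: ennreal_1\<close>)
  also have "\<dots> = ennreal (t powr (-p)) * (ennreal (a powr p) * F)"
    by (simp add: ennreal_mult mult.assoc)
  also have "\<dots> \<le> ennreal (t powr (-p)) * D" using e by (rule mult_left_mono) simp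
  finally show ?thesis by (simp add: mult.commute)
qed


theorem proposition2p6:
  fixes rho f g :: "real \<Rightarrow> real" and c r0 \<beta> :: real and \<Delta> :: ennreal
  assumes c: "c \<ge> 0"
    and rho_nonneg: "\<forall>x\<ge>0. rho x \<ge> 0"
    and rho_mono: "mono_on {0..} rho"
    and rho_diff: "rho differentiable_on {0..}"
    and f_meas: "set_borel_measurable borel {0..} f"
    and g_meas: "set_borel_measurable borel {0..} g"
    and f_nonneg: "\<forall>x\<ge>0. f x \<ge> 0"
    and g_nonneg: "\<forall>x\<ge>0. g x \<ge> 0"
    and r0: "r0 \<ge> 0"
    and beta: "\<beta> \<ge> 0"
    and Delta_def: "\<Delta> = (SUP r\<in>{r0..}. epowr (rhobar rho (Gint g r0 r + ennreal c)) (1 + \<beta>)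
                             * (\<integral>\<^sup>+ u\<in>{r..}. ennreal (f u) \<partial>lborel))"
    and Delta_fin: "\<Delta> < top"
  shows
    "(\<beta> > 0 \<longrightarrow>
       (\<forall>r\<ge>r0. (\<integral>\<^sup>+ u\<in>{r..}. rhobar rho (Gint g r0 u + ennreal c) * ennreal (f u) \<partial>lborel)
          \<le> \<Delta> * ennreal ((1 + \<beta>) / \<beta>) * epowr (rhobar rho (Gint g r0 r + ennreal c)) (- \<beta>)))
     \<and>
     ((\<beta> = 0 \<and> ((\<integral>\<^sup>+ u\<in>{r0..}. ennreal (g u) \<partial>lborel) < top \<or> bounded (rho ` {0..}))) \<longrightarrow>
       (\<forall>r\<ge>r0. (\<integral>\<^sup>+ u\<in>{r..}. rhobar rho (Gint g r0 u + ennreal c) * ennreal (f u) \<partial>lborel)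
          \<le> \<Delta> + \<Delta> *
             (let num = rhobar rho ((\<integral>\<^sup>+ u\<in>{r0..}. ennreal (g u) \<partial>lborel) + ennreal c);
                  den = rhobar rho (Gint g r0 r + ennreal c)
              in if den = 0 then top else ennreal (ln (enn2real num / enn2real den)))))"
proof -
  define h where "h u = rhobar rho (Gint g r0 u + ennreal c)" for u
  define f0 where "f0 u = indicator {0..} u * f u" for u :: real
  have f0m[measurable]: "f0 \<in> borel_measurable borel"
  proof -
    have "f0 = (\<lambda>x. indicator {0..} x * f x)" by (simp add: fun_eq_iff f0_def)
    then show ?thesis using f_meas by (simp add: set_borel_measurable_def)
  qed
  have Fconv: "(\<integral>\<^sup>+x\<in>{r..}. ennreal (f x) \<partial>lborel) = (\<integral>\<^sup>+x. ennreal (f0 x) * indicator {r..} x \<partial>lborel)"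
    if "0 \<le> r" for r
    using that by (intro nn_integral_cong) (auto simp: f0_def indicator_def)
  have Lconv: "(\<integral>\<^sup>+u\<in>{r..}. rhobar rho (Gint g r0 u + ennreal c) * ennreal (f u) \<partial>lborel)
      = (\<integral>\<^sup>+u. h u * ennreal (f0 u) * indicator {r..} u \<partial>lborel)" if "0 \<le> r" for r
    using that by (intro nn_integral_cong) (auto simp: f0_def h_def indicator_def)
  have Gmono: "Gint g r0 u \<le> Gint g r0 v" if "u \<le> v" for u v
    unfolding Gint_def using that by (intro nn_integral_mono) (auto simp: indicator_def)
  have hm: "mono h" unfolding mono_def h_def
    by (auto intro!: rhobar_mono[OF rho_mono] add_right_mono Gmono)
  have Dlt: "epowr (h u) (1+\<beta>) * (\<integral>\<^sup>+x. ennreal (f0 x) * indicator {u..} x \<partial>lborel) \<le> \<Delta>"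
    if u: "r0 \<le> u" for u
  proof -
    have "epowr (h u) (1+\<beta>) * (\<integral>\<^sup>+x\<in>{u..}. ennreal (f x) \<partial>lborel) \<le> \<Delta>"
      unfolding Delta_def h_def by (rule SUP_upper) (use u in simp)
    then show ?thesis using Fconv[of u] u r0 by simp
  qed
  define B where "B t = \<Delta> * ennreal (t powr -(1+\<beta>))" for t
  have Bm: "B \<in> borel_measurable borel" unfolding B_def by measurable
  have bnd: "(\<integral>\<^sup>+x. ennreal (f0 x) * indicator {u..} x \<partial>lborel) \<le> B t"
    if "r0 \<le> r" "r \<le> u" "0 < t" "ennreal t < h u" for r u t
    unfolding B_def by (rule epowr_bound[OF _ _ _ Dlt]) (use beta that in auto)
  have partI: "\<beta> > 0 \<longrightarrow>
       (\<forall>r\<ge>r0. (\<integral>\<^sup>+ u\<in>{r..}. rhobar rho (Gint g r0 u + ennreal c) * ennreal (f u) \<partial>lborel)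
          \<le> \<Delta> * ennreal ((1 + \<beta>) / \<beta>) * epowr (rhobar rho (Gint g r0 r + ennreal c)) (- \<beta>))"
  proof (intro impI allI)
    assume b: "\<beta> > 0"
    fix r assume r: "r0 \<le> r"
    define F where "F = (\<integral>\<^sup>+x. ennreal (f0 x) * indicator {r..} x \<partial>lborel)"
    have C: "(\<integral>\<^sup>+u. h u * ennreal (f0 u) * indicator {r..} u \<partial>lborel) \<le> h r * F
       + (\<integral>\<^sup>+t. B t * indicator {t. 0 < t \<and> h r \<le> ennreal t \<and> ennreal t < top} t \<partial>lborel)"
      unfolding F_def by (rule core[OF hm f0m Bm]) (use bnd r in auto)
    have D: "epowr (h r) (1+\<beta>) * F \<le> \<Delta>" using Dlt r by (simp add: F_def)
    have goal: "(\<integral>\<^sup>+u. h u * ennreal (f0 u) * indicator {r..} u \<partial>lborel)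
        \<le> \<Delta> * ennreal ((1 + \<beta>) / \<beta>) * epowr (h r) (- \<beta>)"
    proof (cases "h r = 0")
      case hr0: True
      show ?thesis
      proof (cases "\<Delta> = 0")
        case True
        have "(\<integral>\<^sup>+t. B t * indicator {t. 0 < t \<and> h r \<le> ennreal t \<and> ennreal t < top} t \<partial>lborel) = 0"
          by (simp add: B_def True)
        with C hr0 show ?thesis by simp
      next
        case False
        have "epowr (h r) (-\<beta>) = top" using hr0 b by (simp add: epowr_def)
        moreover have "\<Delta> * ennreal ((1 + \<beta>) / \<beta>) \<noteq> 0" using False b by simp
        ultimately show ?thesis by (simp add: ennreal_mult_top)
      qed
    next
      case nz: False
      show ?thesis
      proof (cases "h r = top")
        case True
        have "top * F \<le> \<Delta>" using D True b by (simp add: epowr_def)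
        then have F0: "F = 0" using Delta_fin
          by (metis ennreal_top_mult top_unique order.strict_iff_not)
        have "(\<integral>\<^sup>+t. B t * indicator {t. 0 < t \<and> h r \<le> ennreal t \<and> ennreal t < top} t \<partial>lborel) = 0"
        proof -
          have "{t. 0 < t \<and> h r \<le> ennreal t \<and> ennreal t < top} = {}" using True by (auto simp: top_unique)
          then show ?thesis by simp
        qed
        with C F0 show ?thesis by simp
      next
        case False
        then obtain a where a: "h r = ennreal a" "0 < a" using nz
          by (cases "h r") (auto simp: not_le)
        have ep: "epowr (h r) (1+\<beta>) = ennreal (a powr (1+\<beta>))" "epowr (h r) (-\<beta>) = ennreal (a powr -\<beta>)"
          using epowr_pos a b by auto
        have set_eq: "{t. 0 < t \<and> h r \<le> ennreal t \<and> ennreal t < top} = {a..}"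
          using a by (auto simp: ennreal_le_iff)
        have I: "(\<integral>\<^sup>+t. B t * indicator {t. 0 < t \<and> h r \<le> ennreal t \<and> ennreal t < top} t \<partial>lborel)
            = \<Delta> * ennreal (a powr -\<beta> / \<beta>)"
        proof -
          have "(\<integral>\<^sup>+t. B t * indicator {t. 0 < t \<and> h r \<le> ennreal t \<and> ennreal t < top} t \<partial>lborel)
              = (\<integral>\<^sup>+t. \<Delta> * (ennreal (t powr -(1+\<beta>)) * indicator {a..} t) \<partial>lborel)"
            unfolding set_eq B_def by (simp add: mult.assoc)
          also have "\<dots> = \<Delta> * (\<integral>\<^sup>+t. ennreal (t powr -(1+\<beta>)) * indicator {a..} t \<partial>lborel)"
            by (rule nn_integral_cmult) measurable
          also have "\<dots> = \<Delta> * ennreal (a powr -\<beta> / \<beta>)" using int_i[OF a(2) b] by simp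
          finally show ?thesis .
        qed
        have hF: "h r * F \<le> \<Delta> * ennreal (a powr -\<beta>)"
        proof -
          have aa: "a powr -\<beta> * a powr (1+\<beta>) = a" using a by (simp add: powr_add[symmetric])
          have "ennreal (a powr -\<beta>) * (ennreal (a powr (1+\<beta>)) * F)
              = (ennreal (a powr -\<beta>) * ennreal (a powr (1+\<beta>))) * F" by (simp add: mult.assoc)
          also have "ennreal (a powr -\<beta>) * ennreal (a powr (1+\<beta>)) = ennreal (a powr -\<beta> * a powr (1+\<beta>))"
            by (rule ennreal_mult[symmetric]) simp_all
          finally have "h r * F = ennreal (a powr -\<beta>) * (ennreal (a powr (1+\<beta>)) * F)"
            using a aa by simp
          also have "\<dots> \<le> ennreal (a powr -\<beta>) * \<Delta>" using D ep by (intro mult_left_mono) auto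
          finally show ?thesis by (simp add: mult.commute)
        qed
        have "(\<integral>\<^sup>+u. h u * ennreal (f0 u) * indicator {r..} u \<partial>lborel)
            \<le> \<Delta> * ennreal (a powr -\<beta>) + \<Delta> * ennreal (a powr -\<beta> / \<beta>)"
          using C unfolding I by (rule order_trans) (rule add_right_mono[OF hF])
        also have "\<dots> = \<Delta> * (ennreal (a powr -\<beta>) + ennreal (a powr -\<beta> / \<beta>))"
          by (rule distrib_left[symmetric])
        also have "ennreal (a powr -\<beta>) + ennreal (a powr -\<beta> / \<beta>) = ennreal (a powr -\<beta> + a powr -\<beta> / \<beta>)"
          by (rule ennreal_plus[symmetric]) (use b in simp_all)
        also have "a powr -\<beta> + a powr -\<beta> / \<beta> = (1+\<beta>)/\<beta> * a powr -\<beta>"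
          using b by (simp add: field_simps)
        also have "ennreal ((1+\<beta>)/\<beta> * a powr -\<beta>) = ennreal ((1 + \<beta>) / \<beta>) * ennreal (a powr -\<beta>)"
          by (rule ennreal_mult) (use b in simp_all)
        also have "\<Delta> * (ennreal ((1 + \<beta>) / \<beta>) * ennreal (a powr -\<beta>)) = \<Delta> * ennreal ((1 + \<beta>) / \<beta>) * epowr (h r) (- \<beta>)"
          unfolding ep(2) by (rule mult.assoc[symmetric])
        finally show ?thesis .
      qed
    qed
    then show "(\<integral>\<^sup>+ u\<in>{r..}. rhobar rho (Gint g r0 u + ennreal c) * ennreal (f u) \<partial>lborel)
          \<le> \<Delta> * ennreal ((1 + \<beta>) / \<beta>) * epowr (rhobar rho (Gint g r0 r + ennreal c)) (- \<beta>)"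
      using Lconv[of r] r r0 by (simp add: h_def)
  qed
  have partII: "(\<beta> = 0 \<and> ((\<integral>\<^sup>+ u\<in>{r0..}. ennreal (g u) \<partial>lborel) < top \<or> bounded (rho ` {0..}))) \<longrightarrow>
       (\<forall>r\<ge>r0. (\<integral>\<^sup>+ u\<in>{r..}. rhobar rho (Gint g r0 u + ennreal c) * ennreal (f u) \<partial>lborel)
          \<le> \<Delta> + \<Delta> *
             (let num = rhobar rho ((\<integral>\<^sup>+ u\<in>{r0..}. ennreal (g u) \<partial>lborel) + ennreal c);
                  den = rhobar rho (Gint g r0 r + ennreal c)
              in if den = 0 then top else ennreal (ln (enn2real num / enn2real den))))"
  proof (intro impI allI)
    assume hyp: "\<beta> = 0 \<and> ((\<integral>\<^sup>+ u\<in>{r0..}. ennreal (g u) \<partial>lborel) < top \<or> bounded (rho ` {0..}))"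
    then have b0: "\<beta> = 0" by simp
    fix r assume r: "r0 \<le> r"
    define num where "num = rhobar rho ((\<integral>\<^sup>+ u\<in>{r0..}. ennreal (g u) \<partial>lborel) + ennreal c)"
    have hN: "h u \<le> num" for u
    proof -
      have "Gint g r0 u \<le> (\<integral>\<^sup>+ u\<in>{r0..}. ennreal (g u) \<partial>lborel)"
        unfolding Gint_def by (intro nn_integral_mono) (auto simp: indicator_def)
      then show ?thesis unfolding h_def num_def by (intro rhobar_mono[OF rho_mono] add_right_mono)
    qed
    have numfin: "num < top"
    proof (cases "(\<integral>\<^sup>+ u\<in>{r0..}. ennreal (g u) \<partial>lborel) < top")
      case True
      then have "(\<integral>\<^sup>+ u\<in>{r0..}. ennreal (g u) \<partial>lborel) + ennreal c \<noteq> top" by simp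
      then show ?thesis by (simp add: num_def rhobar_def)
    next
      case False
      then have "bounded (rho ` {0..})" using hyp by simp
      then obtain M where M: "\<And>x. x \<in> {0..} \<Longrightarrow> norm (rho x) \<le> M" unfolding bounded_iff by auto
      have rM: "ennreal (rho x) \<le> ennreal M" if "0 \<le> x" for x
        using M[of x] that by (intro ennreal_leI) auto
      have "num \<le> ennreal M"
      proof (cases "(\<integral>\<^sup>+ u\<in>{r0..}. ennreal (g u) \<partial>lborel) + ennreal c = top")
        case True
        have "(SUP t\<in>{0..}. ennreal (rho t)) \<le> ennreal M" by (rule SUP_least) (simp add: rM)
        then show ?thesis using True unfolding num_def rhobar_def by simp
      next
        case False
        then show ?thesis unfolding num_def rhobar_def by (simp add: rM)
      qed
      then show ?thesis using order.strict_trans1 by fastforce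
    qed
    define F where "F = (\<integral>\<^sup>+x. ennreal (f0 x) * indicator {r..} x \<partial>lborel)"
    have C: "(\<integral>\<^sup>+u. h u * ennreal (f0 u) * indicator {r..} u \<partial>lborel) \<le> h r * F
       + (\<integral>\<^sup>+t. B t * indicator {t. 0 < t \<and> h r \<le> ennreal t \<and> ennreal t < num} t \<partial>lborel)"
      unfolding F_def by (rule core[OF hm f0m Bm]) (use bnd r hN in auto)
    have D: "h r * F \<le> \<Delta>" using Dlt[OF r] b0 by (simp add: F_def epowr_one)
    have goal: "(\<integral>\<^sup>+u. h u * ennreal (f0 u) * indicator {r..} u \<partial>lborel)
        \<le> \<Delta> + \<Delta> * (if h r = 0 then top else ennreal (ln (enn2real num / enn2real (h r))))"
    proof (cases "h r = 0")
      case hr0: True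
      show ?thesis
      proof (cases "\<Delta> = 0")
        case True
        have "(\<integral>\<^sup>+t. B t * indicator {t. 0 < t \<and> h r \<le> ennreal t \<and> ennreal t < num} t \<partial>lborel) = 0"
          by (simp add: B_def True)
        with C hr0 show ?thesis by simp
      next
        case False
        then show ?thesis using hr0 by simp
      qed
    next
      case nz: False
      have hrt: "h r < top" using hN[of r] numfin by simp
      then obtain a where a: "h r = ennreal a" "0 < a" using nz
        by (cases "h r") (auto simp: not_le)
      obtain n where n: "num = ennreal n" "0 \<le> n" using numfin by (cases num) auto
      have an: "a \<le> n" using hN[of r] a n by simp
      have I: "(\<integral>\<^sup>+t. B t * indicator {t. 0 < t \<and> h r \<le> ennreal t \<and> ennreal t < num} t \<partial>lborel)
          \<le> \<Delta> * ennreal (ln n - ln a)"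
      proof -
        have "(\<integral>\<^sup>+t. B t * indicator {t. 0 < t \<and> h r \<le> ennreal t \<and> ennreal t < num} t \<partial>lborel)
            \<le> (\<integral>\<^sup>+t. \<Delta> * (ennreal (t powr -1) * indicator {a..n} t) \<partial>lborel)"
        proof (rule nn_integral_mono)
          fix t
          show "B t * indicator {t. 0 < t \<and> h r \<le> ennreal t \<and> ennreal t < num} t
              \<le> \<Delta> * (ennreal (t powr -1) * indicator {a..n} t)"
          proof (cases "0 < t \<and> h r \<le> ennreal t \<and> ennreal t < num")
            case True
            then have "a \<le> t" "t \<le> n" using a n by (auto simp: ennreal_le_iff ennreal_less_iff)
            then show ?thesis using True b0 by (simp add: B_def indicator_def)
          qed simp
        qed
        also have "\<dots> = \<Delta> * (\<integral>\<^sup>+t. ennreal (t powr -1) * indicator {a..n} t \<partial>lborel)"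
          by (rule nn_integral_cmult) measurable
        also have "\<dots> = \<Delta> * ennreal (ln n - ln a)" using int_ii[OF a(2) an] by simp
        finally show ?thesis .
      qed
      have lnq: "ln (enn2real num / enn2real (h r)) = ln n - ln a"
        using a n an by (simp add: ln_div)
      show ?thesis
        unfolding lnq using nz C add_mono[OF D I] by (auto intro: order_trans)
    qed
    then show "(\<integral>\<^sup>+ u\<in>{r..}. rhobar rho (Gint g r0 u + ennreal c) * ennreal (f u) \<partial>lborel)
          \<le> \<Delta> + \<Delta> *
             (let num = rhobar rho ((\<integral>\<^sup>+ u\<in>{r0..}. ennreal (g u) \<partial>lborel) + ennreal c);
                  den = rhobar rho (Gint g r0 r + ennreal c)
              in if den = 0 then top else ennreal (ln (enn2real num / enn2real den)))"
    proof -
      have E: "(let num = rhobar rho ((\<integral>\<^sup>+ u\<in>{r0..}. ennreal (g u) \<partial>lborel) + ennreal c);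
                  den = rhobar rho (Gint g r0 r + ennreal c)
              in if den = 0 then top else ennreal (ln (enn2real num / enn2real den)))
          = (if h r = 0 then top else ennreal (ln (enn2real num / enn2real (h r))))"
        by (simp only: Let_def h_def num_def)
      have r00: "0 \<le> r" using r r0 by simp
      show ?thesis unfolding E Lconv[OF r00] by (rule goal)
    qed
  qed
  show ?thesis using partI partII by blast
qed

end
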